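(* Let $A\in\mathbb{R}^{n\times n}$ be symmetric positive definite. Let $S$ be the operator of one V-cycle of the classical (Ruge–Stüben) algebraic multigrid method for $A$ with Gauss–Seidel smoothing on every level: with levels $l=L,\dots,0$, $A_L=A$, full-column-rank interpolation matrices $P_l$ and $A_l=P_l^TA_{l+1}P_l$, the level operators are defined recursively by $B_0=A_0^{-1}$ and $I-B_lA_l=(I-S_l^TA_l)(I-P_{l-1}B_{l-1}P_{l-1}^TA_l)(I-S_lA_l)$ for $l\ge1$, where $S_l$ is the (forward) Gauss–Seidel smoother for $A_l$, and $S=B_L$. Let $B$ be the ILU($k$) preconditioner for $A$, which for SPD $A$ is the incomplete Cholesky preconditioner IC($k$), $B=(LL^T)^{-1}$. Define $B_{\mathrm{co}}$ by $I-B_{\mathrm{co}}A=(I-S^TA)(I-BA)(I-SA)$. Then $B_{\mathrm{co}}$ is symmetric positive definite.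
   Context: ILU($k$)/IC($k$) is incomplete factorization by Gaussian elimination in which fill-in entries are dropped according to their level of fill: initially $\mathcal L_{ij}=0$ if $a_{ij}\ne0$ or $i=j$ and $\mathcal L_{ij}=\infty$ otherwise; when an entry is updated by $a_{ij}:=a_{ij}-a_{ik}a_{kj}$, its level is updated by $\mathcal L_{ij}=\min\{\mathcal L_{ij},\mathcal L_{ik}+\mathcal L_{kj}+1\}$, and entries with level greater than $k$ are set to zero. The incomplete Cholesky factor $L$ is lower triangular and the factorization is assumed to be well defined (real, with positive diagonal). Gauss–Seidel smoother $S_l=(D_l+L_l)^{-1}$ with $D_l$, $L_l$ the diagonal and strictly lower triangular parts of $A_l$; transposes are Euclidean transposes. *)

theory Defs
  imports Complex_Main "HOL-Library.Extended_Nat" "Jordan_Normal_Form.Matrix"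
begin

definition spd :: "real mat \<Rightarrow> nat \<Rightarrow> bool" where
  "spd M n \<longleftrightarrow> M \<in> carrier_mat n n \<and> transpose_mat M = M \<and>
     (\<forall>v \<in> carrier_vec n. v \<noteq> 0\<^sub>v n \<longrightarrow> scalar_prod v (M *\<^sub>v v) > 0)"

definition full_col_rank :: "real mat \<Rightarrow> bool" where
  "full_col_rank P \<longleftrightarrow>
     (\<forall>v \<in> carrier_vec (dim_col P). P *\<^sub>v v = 0\<^sub>v (dim_row P) \<longrightarrow> v = 0\<^sub>v (dim_col P))"

(* D + L : diagonal plus strictly lower triangular part of a square matrix;
   the forward Gauss-Seidel smoother is S = (D + L)^{-1} *)
definition gs_part :: "real mat \<Rightarrow> real mat" where
  "gs_part M = mat (dim_row M) (dim_col M) (\<lambda>(i,j). if j \<le> i then M $$ (i,j) else 0)"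

(* ILU(k) by Gaussian elimination with level-of-fill dropping.
   State: entries a and levels lev (enat, \<infinity> = never filled). *)
type_synonym iluk_st = "(nat \<Rightarrow> nat \<Rightarrow> real) \<times> (nat \<Rightarrow> nat \<Rightarrow> enat)"

definition kept :: "nat \<Rightarrow> iluk_st \<Rightarrow> nat \<Rightarrow> nat \<Rightarrow> real" where
  "kept k st i j = (if snd st i j \<le> enat k then fst st i j else 0)"

(* elimination step with pivot p: multipliers stored in column p below the diagonal,
   a_ij := a_ij - a_ip a_pj and lev_ij := min lev_ij (lev_ip + lev_pj + 1) for i,j > p *)
definition iluk_step :: "nat \<Rightarrow> nat \<Rightarrow> iluk_st \<Rightarrow> iluk_st" where
  "iluk_step k p st =
     ((\<lambda>i j. if p < i \<and> j = p then kept k st i p / kept k st p p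
            else if p < i \<and> p < j then fst st i j - (kept k st i p / kept k st p p) * kept k st p j
            else fst st i j),
      (\<lambda>i j. if p < i \<and> p < j then min (snd st i j) (snd st i p + snd st p j + 1)
            else snd st i j))"

fun iluk_state :: "nat \<Rightarrow> real mat \<Rightarrow> nat \<Rightarrow> iluk_st" where
  "iluk_state k A 0 = ((\<lambda>i j. A $$ (i,j)),
                       (\<lambda>i j. if A $$ (i,j) \<noteq> 0 \<or> i = j then 0 else \<infinity>))"
| "iluk_state k A (Suc p) = iluk_step k p (iluk_state k A p)"

definition iluk_final :: "nat \<Rightarrow> real mat \<Rightarrow> iluk_st" where
  "iluk_final k A = iluk_state k A (dim_row A)"

definition iluk_pivot :: "nat \<Rightarrow> real mat \<Rightarrow> nat \<Rightarrow> real" where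
  "iluk_pivot k A j = kept k (iluk_final k A) j j"

definition iluk_L :: "nat \<Rightarrow> real mat \<Rightarrow> real mat" where
  "iluk_L k A = mat (dim_row A) (dim_row A)
     (\<lambda>(i,j). if i = j then 1 else if j < i then kept k (iluk_final k A) i j else 0)"

definition iluk_U :: "nat \<Rightarrow> real mat \<Rightarrow> real mat" where
  "iluk_U k A = mat (dim_row A) (dim_row A)
     (\<lambda>(i,j). if i \<le> j then kept k (iluk_final k A) i j else 0)"

(* IC(k) factor for SPD A: L = L_unit * D^(1/2), where D = diag(U); then L L^T = L_unit U *)
definition ick_factor :: "nat \<Rightarrow> real mat \<Rightarrow> real mat" where
  "ick_factor k A = mat (dim_row A) (dim_row A)
     (\<lambda>(i,j). iluk_L k A $$ (i,j) * sqrt (iluk_pivot k A j))"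

end

theory Submission
  imports Defs "Jordan_Normal_Form.Determinant"
begin



lemma sym_form:
  fixes A :: "real mat"
  assumes A: "A \<in> carrier_mat n n" "transpose_mat A = A" and u: "u \<in> carrier_vec n" and v: "v \<in> carrier_vec n"
  shows "u \<bullet> (A *\<^sub>v v) = v \<bullet> (A *\<^sub>v u)"
proof -
  have "u \<bullet> (A *\<^sub>v v) = (transpose_mat A *\<^sub>v u) \<bullet> v"
    using transpose_vec_mult_scalar[OF A(1) v u] by simp
  also have "\<dots> = v \<bullet> (A *\<^sub>v u)" using A u v by (simp add: comm_scalar_prod[of _ n])
  finally show ?thesis .
qed

lemma transp_form:
  fixes M :: "real mat"
  assumes M: "M \<in> carrier_mat n m" and u: "u \<in> carrier_vec n" and v: "v \<in> carrier_vec m"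
  shows "u \<bullet> (M *\<^sub>v v) = (transpose_mat M *\<^sub>v u) \<bullet> v"
  using transpose_vec_mult_scalar[OF M v u] by simp

lemma sym_from_bilinear:
  fixes M :: "real mat"
  assumes M: "M \<in> carrier_mat n n"
    and S: "\<And>u v. u \<in> carrier_vec n \<Longrightarrow> v \<in> carrier_vec n \<Longrightarrow> u \<bullet> (M *\<^sub>v v) = v \<bullet> (M *\<^sub>v u)"
  shows "transpose_mat M = M"
proof (rule eq_matI)
  fix i j assume i: "i < dim_row M" and j: "j < dim_col M"
  have e: "\<And>a b. a < n \<Longrightarrow> b < n \<Longrightarrow> unit_vec n a \<bullet> (M *\<^sub>v unit_vec n b) = M $$ (a, b)"
    using M by (simp add: scalar_prod_left_unit)
  have "M $$ (j, i) = M $$ (i, j)" using S[of "unit_vec n j" "unit_vec n i"] e i j M by auto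
  then show "transpose_mat M $$ (i, j) = M $$ (i, j)" using i j M by auto
qed (use M in auto)

lemma spd_inverse:
  assumes A: "spd A n"
  shows "\<exists>Ai \<in> carrier_mat n n. Ai * A = 1\<^sub>m n \<and> A * Ai = 1\<^sub>m n"
proof -
  have Ac: "A \<in> carrier_mat n n" using A by (simp add: spd_def)
  have "det A \<noteq> 0"
  proof
    assume "det A = 0"
    then obtain v where v: "v \<in> carrier_vec n" "v \<noteq> 0\<^sub>v n" "A *\<^sub>v v = 0\<^sub>v n"
      using det_0_iff_vec_prod_zero[OF Ac] by auto
    then have "v \<bullet> (A *\<^sub>v v) > 0" using A by (auto simp: spd_def)
    with v show False by simp
  qed
  from det_non_zero_imp_unit[OF Ac this, of undefined]
  show ?thesis using Ac by (auto simp: Units_def ring_mat_simps)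
qed



lemma nonexp_general:
  fixes A S G :: "real mat"
  assumes A: "A \<in> carrier_mat n n" "transpose_mat A = A"
    and S: "S \<in> carrier_mat n n" and G: "G \<in> carrier_mat n n" and GS: "G * S = 1\<^sub>m n"
    and Q: "\<And>v. v \<in> carrier_vec n \<Longrightarrow> v \<bullet> (A *\<^sub>v v) \<le> 2 * (v \<bullet> (G *\<^sub>v v))"
    and y: "y \<in> carrier_vec n"
  shows "((1\<^sub>m n - S * A) *\<^sub>v y) \<bullet> (A *\<^sub>v ((1\<^sub>m n - S * A) *\<^sub>v y)) \<le> y \<bullet> (A *\<^sub>v y)"
proof -
  define u where "u = A *\<^sub>v y"
  define w where "w = S *\<^sub>v u"
  have uc: "u \<in> carrier_vec n" and wc: "w \<in> carrier_vec n" using A S y by (auto simp: u_def w_def)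
  have e: "(1\<^sub>m n - S * A) *\<^sub>v y = y - w"
    using A S y by (simp add: minus_mult_distrib_mat_vec[of _ n n] u_def w_def)
  have Gw: "G *\<^sub>v w = u"
  proof -
    have "G *\<^sub>v w = (G * S) *\<^sub>v u" using G S uc by (simp add: w_def)
    then show ?thesis using GS uc by simp
  qed
  have "(y - w) \<bullet> (A *\<^sub>v (y - w)) = y \<bullet> (A *\<^sub>v y) - y \<bullet> (A *\<^sub>v w) - (w \<bullet> (A *\<^sub>v y) - w \<bullet> (A *\<^sub>v w))"
    using A y wc by (simp add: mult_minus_distrib_mat_vec[of _ n n] scalar_prod_minus_distrib[of _ n]
        minus_scalar_prod_distrib[of _ n])
  also have "y \<bullet> (A *\<^sub>v w) = w \<bullet> (A *\<^sub>v y)" using sym_form[OF A y wc] .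
  also have "w \<bullet> (A *\<^sub>v y) = w \<bullet> (G *\<^sub>v w)" using Gw by (simp add: u_def)
  finally show ?thesis using e Q[OF wc] by simp
qed

lemma gs_quad:
  fixes A :: "real mat"
  assumes A: "spd A n" and v: "v \<in> carrier_vec n"
  shows "v \<bullet> (A *\<^sub>v v) \<le> 2 * (v \<bullet> (gs_part A *\<^sub>v v))"
proof -
  have Ac: "A \<in> carrier_mat n n" and At: "transpose_mat A = A" using A by (auto simp: spd_def)
  define G where "G = gs_part A"
  define D where "D = mat n n (\<lambda>(i,j). if i = j then A $$ (i,j) else 0)"
  have Gc: "G \<in> carrier_mat n n" using Ac by (auto simp: G_def gs_part_def)
  have Dc: "D \<in> carrier_mat n n" by (auto simp: D_def)
  have Aij: "\<And>i j. i < n \<Longrightarrow> j < n \<Longrightarrow> A $$ (j, i) = A $$ (i, j)"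
    using At Ac by (metis carrier_matD index_transpose_mat(1))
  have GGt: "G + transpose_mat G = A + D"
    by (rule eq_matI, insert Ac Aij, auto simp: G_def D_def gs_part_def)
  have diag: "\<And>i. i < n \<Longrightarrow> A $$ (i,i) > 0"
  proof -
    fix i assume i: "i < n"
    have "unit_vec n i \<noteq> 0\<^sub>v n" using i by (metis index_unit_vec(1) index_zero_vec(1) zero_neq_one)
    then have "unit_vec n i \<bullet> (A *\<^sub>v unit_vec n i) > 0" using A by (auto simp: spd_def)
    then show "A $$ (i,i) > 0" using Ac i by (simp add: scalar_prod_left_unit)
  qed
  have Dv: "D *\<^sub>v v = vec n (\<lambda>i. A $$ (i,i) * v $ i)"
  proof (rule eq_vecI)
    fix i assume "i < dim_vec (vec n (\<lambda>i. A $$ (i, i) * v $ i))"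
    then have i: "i < n" by simp
    have "row D i = A $$ (i,i) \<cdot>\<^sub>v unit_vec n i"
      by (rule eq_vecI, insert i, auto simp: D_def unit_vec_def)
    then show "(D *\<^sub>v v) $ i = vec n (\<lambda>i. A $$ (i, i) * v $ i) $ i"
      using i v Dc by (simp add: scalar_prod_left_unit)
  qed (use Dc in auto)
  have Dnn: "v \<bullet> (D *\<^sub>v v) \<ge> 0"
    unfolding Dv scalar_prod_def using diag v
  proof (auto intro!: sum_nonneg)
    fix x assume "x < n"
    then have "0 \<le> A $$ (x,x) * (v $ x * v $ x)" using diag by (simp add: less_imp_le)
    then show "0 \<le> v $ x * (A $$ (x, x) * v $ x)" by (simp add: algebra_simps)
  qed
  have t: "v \<bullet> (transpose_mat G *\<^sub>v v) = v \<bullet> (G *\<^sub>v v)"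
    using transp_form[OF Gc v v] Gc v by (simp add: comm_scalar_prod[of _ n])
  have "v \<bullet> (G *\<^sub>v v) + v \<bullet> (transpose_mat G *\<^sub>v v) = v \<bullet> ((G + transpose_mat G) *\<^sub>v v)"
    using Gc v by (simp add: add_mult_distrib_mat_vec[of _ n n] scalar_prod_add_distrib[of _ n])
  also have "\<dots> = v \<bullet> (A *\<^sub>v v) + v \<bullet> (D *\<^sub>v v)"
    unfolding GGt using Ac Dc v by (simp add: add_mult_distrib_mat_vec[of _ n n] scalar_prod_add_distrib[of _ n])
  finally show ?thesis using t Dnn by (simp add: G_def)
qed



definition nonexp :: "real mat \<Rightarrow> real mat \<Rightarrow> nat \<Rightarrow> bool" where
  "nonexp A E n \<longleftrightarrow> E \<in> carrier_mat n n \<and>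
     (\<forall>y \<in> carrier_vec n. (E *\<^sub>v y) \<bullet> (A *\<^sub>v (E *\<^sub>v y)) \<le> y \<bullet> (A *\<^sub>v y))"

definition tinv :: "real mat \<Rightarrow> real mat \<Rightarrow> nat \<Rightarrow> bool" where
  "tinv A T n \<longleftrightarrow> T \<in> carrier_mat n n \<and>
     (\<forall>u \<in> carrier_vec n. \<forall>v \<in> carrier_vec n. u \<bullet> (A *\<^sub>v (T *\<^sub>v v)) = v \<bullet> (A *\<^sub>v (T *\<^sub>v u))) \<and>
     (\<forall>y \<in> carrier_vec n. (T *\<^sub>v y) \<bullet> (A *\<^sub>v (T *\<^sub>v y)) \<le> y \<bullet> (A *\<^sub>v (T *\<^sub>v y)) \<and>
         y \<bullet> (A *\<^sub>v (T *\<^sub>v y)) \<le> y \<bullet> (A *\<^sub>v y))"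

definition binv :: "real mat \<Rightarrow> real mat \<Rightarrow> nat \<Rightarrow> bool" where
  "binv A B n \<longleftrightarrow> B \<in> carrier_mat n n \<and>
     (\<forall>u \<in> carrier_vec n. \<forall>v \<in> carrier_vec n. u \<bullet> (B *\<^sub>v v) = v \<bullet> (B *\<^sub>v u)) \<and>
     (\<forall>z \<in> carrier_vec n. 0 \<le> z \<bullet> (B *\<^sub>v z) \<and> (B *\<^sub>v z) \<bullet> (A *\<^sub>v (B *\<^sub>v z)) \<le> z \<bullet> (B *\<^sub>v z))"

lemma gs_nonexp:
  fixes A S :: "real mat"
  assumes A: "spd A n" and S: "S \<in> carrier_mat n n" and SG: "S * gs_part A = 1\<^sub>m n"
  shows "nonexp A (1\<^sub>m n - S * A) n" "nonexp A (1\<^sub>m n - transpose_mat S * A) n"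
proof -
  have Ac: "A \<in> carrier_mat n n" and At: "transpose_mat A = A" using A by (auto simp: spd_def)
  define G where "G = gs_part A"
  have Gc: "G \<in> carrier_mat n n" using Ac by (auto simp: G_def gs_part_def)
  have GS: "G * S = 1\<^sub>m n" using mat_mult_left_right_inverse[OF S Gc] SG by (simp add: G_def)
  have GSt: "transpose_mat G * transpose_mat S = 1\<^sub>m n"
    using SG transpose_mult[OF S Gc] by (simp add: G_def)
  have t: "\<And>v. v \<in> carrier_vec n \<Longrightarrow> v \<bullet> (transpose_mat G *\<^sub>v v) = v \<bullet> (G *\<^sub>v v)"
    using transp_form[OF Gc] Gc by (simp add: comm_scalar_prod[of _ n])
  show "nonexp A (1\<^sub>m n - S * A) n"
    unfolding nonexp_def using nonexp_general[OF Ac At S Gc GS] gs_quad[OF A] Ac S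
    by (auto simp: G_def)
  show "nonexp A (1\<^sub>m n - transpose_mat S * A) n"
    unfolding nonexp_def using nonexp_general[OF Ac At _ _ GSt] gs_quad[OF A] Ac S Gc t
    by (auto simp: G_def)
qed

lemma compose_tinv:
  fixes A C E E' :: "real mat"
  assumes A: "A \<in> carrier_mat n n" "transpose_mat A = A"
    and C: "tinv A C n" and E: "nonexp A E n" and E': "nonexp A E' n"
    and adj: "\<And>u v. u \<in> carrier_vec n \<Longrightarrow> v \<in> carrier_vec n \<Longrightarrow>
                u \<bullet> (A *\<^sub>v (E' *\<^sub>v v)) = (E *\<^sub>v u) \<bullet> (A *\<^sub>v v)"
  shows "tinv A (E' * C * E) n"
proof -
  have Cc: "C \<in> carrier_mat n n" and Ec: "E \<in> carrier_mat n n" and E'c: "E' \<in> carrier_mat n n"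
    using C E E' by (auto simp: tinv_def nonexp_def)
  have app: "\<And>y. y \<in> carrier_vec n \<Longrightarrow> (E' * C * E) *\<^sub>v y = E' *\<^sub>v (C *\<^sub>v (E *\<^sub>v y))"
  proof -
    fix y :: "real vec" assume y: "y \<in> carrier_vec n"
    have "(E' * C * E) *\<^sub>v y = (E' * C) *\<^sub>v (E *\<^sub>v y)"
      by (rule assoc_mult_mat_vec[of _ n n], insert Cc Ec E'c y, auto)
    also have "\<dots> = E' *\<^sub>v (C *\<^sub>v (E *\<^sub>v y))"
      by (rule assoc_mult_mat_vec[of _ n n], insert Cc Ec E'c y, auto)
    finally show "(E' * C * E) *\<^sub>v y = E' *\<^sub>v (C *\<^sub>v (E *\<^sub>v y))" .
  qed
  have Tc: "E' * C * E \<in> carrier_mat n n" using Cc Ec E'c by simp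
  {
    fix u v :: "real vec" assume u: "u \<in> carrier_vec n" and v: "v \<in> carrier_vec n"
    have "u \<bullet> (A *\<^sub>v ((E' * C * E) *\<^sub>v v)) = (E *\<^sub>v u) \<bullet> (A *\<^sub>v (C *\<^sub>v (E *\<^sub>v v)))"
      using app[OF v] adj[OF u, of "C *\<^sub>v (E *\<^sub>v v)"] Cc Ec v by simp
    also have "\<dots> = (E *\<^sub>v v) \<bullet> (A *\<^sub>v (C *\<^sub>v (E *\<^sub>v u)))"
      using C Ec u v by (simp add: tinv_def)
    also have "\<dots> = v \<bullet> (A *\<^sub>v ((E' * C * E) *\<^sub>v u))"
      using app[OF u] adj[OF v, of "C *\<^sub>v (E *\<^sub>v u)"] Cc Ec u by simp
    finally have "u \<bullet> (A *\<^sub>v ((E' * C * E) *\<^sub>v v)) = v \<bullet> (A *\<^sub>v ((E' * C * E) *\<^sub>v u))" .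
  } note s = this
  {
    fix y :: "real vec" assume y: "y \<in> carrier_vec n"
    define x where "x = E *\<^sub>v y"
    define w where "w = C *\<^sub>v x"
    have xc: "x \<in> carrier_vec n" and wc: "w \<in> carrier_vec n" using Ec Cc y by (auto simp: x_def w_def)
    have ty: "(E' * C * E) *\<^sub>v y = E' *\<^sub>v w" using app[OF y] by (simp add: x_def w_def)
    have q: "y \<bullet> (A *\<^sub>v ((E' * C * E) *\<^sub>v y)) = x \<bullet> (A *\<^sub>v w)"
      using ty adj[OF y wc] by (simp add: x_def)
    have c1: "w \<bullet> (A *\<^sub>v w) \<le> x \<bullet> (A *\<^sub>v w)" and c2: "x \<bullet> (A *\<^sub>v w) \<le> x \<bullet> (A *\<^sub>v x)"
      using C xc by (auto simp: tinv_def w_def)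
    have e1: "(E' *\<^sub>v w) \<bullet> (A *\<^sub>v (E' *\<^sub>v w)) \<le> w \<bullet> (A *\<^sub>v w)" using E' wc by (simp add: nonexp_def)
    have e2: "x \<bullet> (A *\<^sub>v x) \<le> y \<bullet> (A *\<^sub>v y)" using E y by (simp add: nonexp_def x_def)
    have "((E' * C * E) *\<^sub>v y) \<bullet> (A *\<^sub>v ((E' * C * E) *\<^sub>v y)) \<le> y \<bullet> (A *\<^sub>v ((E' * C * E) *\<^sub>v y)) \<and>
         y \<bullet> (A *\<^sub>v ((E' * C * E) *\<^sub>v y)) \<le> y \<bullet> (A *\<^sub>v y)"
      using ty q c1 c2 e1 e2 by simp
  }
  then show ?thesis using s Tc by (simp add: tinv_def)
qed

lemma coarse_tinv:
  fixes A P B' :: "real mat"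
  assumes A: "A \<in> carrier_mat n n" "transpose_mat A = A"
    and P: "P \<in> carrier_mat n m"
    and B': "binv (transpose_mat P * A * P) B' m"
  shows "tinv A (1\<^sub>m n - P * B' * transpose_mat P * A) n"
proof -
  have Bc: "B' \<in> carrier_mat m m" using B' by (simp add: binv_def)
  have Pt: "transpose_mat P \<in> carrier_mat m n" using P by simp
  define C where "C = 1\<^sub>m n - P * B' * transpose_mat P * A"
  have "P * B' \<in> carrier_mat n m" using P Bc by simp
  then have "P * B' * transpose_mat P \<in> carrier_mat n n" using Pt by simp
  then have "P * B' * transpose_mat P * A \<in> carrier_mat n n" using A by simp
  then have Cc: "C \<in> carrier_mat n n" unfolding C_def by (rule minus_carrier_mat)
  have Cy: "\<And>y. y \<in> carrier_vec n \<Longrightarrow> C *\<^sub>v y = y - P *\<^sub>v (B' *\<^sub>v (transpose_mat P *\<^sub>v (A *\<^sub>v y)))"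
  proof -
    fix y :: "real vec" assume y: "y \<in> carrier_vec n"
    have PB: "P * B' \<in> carrier_mat n m" using P Bc by simp
    have PBP: "P * B' * transpose_mat P \<in> carrier_mat n n" using PB Pt by simp
    have "(P * B' * transpose_mat P * A) *\<^sub>v y = (P * B' * transpose_mat P) *\<^sub>v (A *\<^sub>v y)"
      by (rule assoc_mult_mat_vec[OF PBP A(1) y])
    also have "\<dots> = (P * B') *\<^sub>v (transpose_mat P *\<^sub>v (A *\<^sub>v y))"
      by (rule assoc_mult_mat_vec[OF PB Pt], insert A y, simp)
    also have "\<dots> = P *\<^sub>v (B' *\<^sub>v (transpose_mat P *\<^sub>v (A *\<^sub>v y)))"
      by (rule assoc_mult_mat_vec[OF P Bc], insert A y P, simp)
    finally have e: "(P * B' * transpose_mat P * A) *\<^sub>v y = P *\<^sub>v (B' *\<^sub>v (transpose_mat P *\<^sub>v (A *\<^sub>v y)))" .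
    have "C *\<^sub>v y = 1\<^sub>m n *\<^sub>v y - (P * B' * transpose_mat P * A) *\<^sub>v y"
      unfolding C_def by (rule minus_mult_distrib_mat_vec, insert PBP A y, auto)
    then show "C *\<^sub>v y = y - P *\<^sub>v (B' *\<^sub>v (transpose_mat P *\<^sub>v (A *\<^sub>v y)))" using e y by simp
  qed
  have key: "\<And>u y. u \<in> carrier_vec n \<Longrightarrow> y \<in> carrier_vec n \<Longrightarrow>
      u \<bullet> (A *\<^sub>v (C *\<^sub>v y)) = u \<bullet> (A *\<^sub>v y) - (transpose_mat P *\<^sub>v (A *\<^sub>v u)) \<bullet> (B' *\<^sub>v (transpose_mat P *\<^sub>v (A *\<^sub>v y)))"
  proof -
    fix u y :: "real vec" assume u: "u \<in> carrier_vec n" and y: "y \<in> carrier_vec n"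
    define p where "p = B' *\<^sub>v (transpose_mat P *\<^sub>v (A *\<^sub>v y))"
    have pc: "p \<in> carrier_vec m" using Bc P A y by (simp add: p_def)
    have "u \<bullet> (A *\<^sub>v (C *\<^sub>v y)) = u \<bullet> (A *\<^sub>v y) - u \<bullet> (A *\<^sub>v (P *\<^sub>v p))"
      using Cy[OF y] A P pc u y
      by (simp add: mult_minus_distrib_mat_vec[of _ n n] scalar_prod_minus_distrib[of _ n] p_def)
    also have "u \<bullet> (A *\<^sub>v (P *\<^sub>v p)) = (A *\<^sub>v u) \<bullet> (P *\<^sub>v p)"
      using transp_form[OF A(1) u, of "P *\<^sub>v p"] A P pc by simp
    also have "\<dots> = (transpose_mat P *\<^sub>v (A *\<^sub>v u)) \<bullet> p"
      using transp_form[OF P _ pc, of "A *\<^sub>v u"] A u by simp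
    finally show "u \<bullet> (A *\<^sub>v (C *\<^sub>v y)) = u \<bullet> (A *\<^sub>v y) - (transpose_mat P *\<^sub>v (A *\<^sub>v u)) \<bullet> (B' *\<^sub>v (transpose_mat P *\<^sub>v (A *\<^sub>v y)))"
      by (simp add: p_def)
  qed
  {
    fix u v :: "real vec" assume u: "u \<in> carrier_vec n" and v: "v \<in> carrier_vec n"
    have "u \<bullet> (A *\<^sub>v (C *\<^sub>v v)) = v \<bullet> (A *\<^sub>v (C *\<^sub>v u))"
      unfolding key[OF u v] key[OF v u] using sym_form[OF A u v] B' A P u v
      by (simp add: binv_def)
  } note s = this
  {
    fix y :: "real vec" assume y: "y \<in> carrier_vec n"
    define z where "z = transpose_mat P *\<^sub>v (A *\<^sub>v y)"
    define p where "p = B' *\<^sub>v z"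
    have zc: "z \<in> carrier_vec m" and pc: "p \<in> carrier_vec m" using Bc P A y by (auto simp: p_def z_def)
    have k1: "y \<bullet> (A *\<^sub>v (C *\<^sub>v y)) = y \<bullet> (A *\<^sub>v y) - z \<bullet> p"
      using key[OF y y] by (simp add: z_def p_def)
    have b1: "0 \<le> z \<bullet> p" and b2: "p \<bullet> ((transpose_mat P * A * P) *\<^sub>v p) \<le> z \<bullet> p"
      using B' zc by (auto simp: binv_def p_def)
    have pp: "p \<bullet> ((transpose_mat P * A * P) *\<^sub>v p) = (P *\<^sub>v p) \<bullet> (A *\<^sub>v (P *\<^sub>v p))"
    proof -
      have PtA: "transpose_mat P * A \<in> carrier_mat m n" using Pt A by simp
      have "(transpose_mat P * A * P) *\<^sub>v p = (transpose_mat P * A) *\<^sub>v (P *\<^sub>v p)"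
        by (rule assoc_mult_mat_vec[OF PtA P pc])
      also have "\<dots> = transpose_mat P *\<^sub>v (A *\<^sub>v (P *\<^sub>v p))"
        by (rule assoc_mult_mat_vec[OF Pt A(1)], insert P pc, simp)
      finally have e: "(transpose_mat P * A * P) *\<^sub>v p = transpose_mat P *\<^sub>v (A *\<^sub>v (P *\<^sub>v p))" .
      have APp: "A *\<^sub>v (P *\<^sub>v p) \<in> carrier_vec n" using A P pc by simp
      have "p \<bullet> (transpose_mat P *\<^sub>v (A *\<^sub>v (P *\<^sub>v p))) = (transpose_mat P *\<^sub>v (A *\<^sub>v (P *\<^sub>v p))) \<bullet> p"
        by (rule comm_scalar_prod[of _ m], insert pc Pt APp, auto)
      also have "\<dots> = (A *\<^sub>v (P *\<^sub>v p)) \<bullet> (P *\<^sub>v p)"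
        using transp_form[OF P APp pc] by simp
      also have "\<dots> = (P *\<^sub>v p) \<bullet> (A *\<^sub>v (P *\<^sub>v p))"
        by (rule comm_scalar_prod[of _ n], insert APp P pc, auto)
      finally show ?thesis unfolding e .
    qed
    have Cy': "C *\<^sub>v y = y - P *\<^sub>v p" using Cy[OF y] by (simp add: z_def p_def)
    have pyc: "P *\<^sub>v p \<in> carrier_vec n" using P pc by simp
    have zp: "(P *\<^sub>v p) \<bullet> (A *\<^sub>v y) = z \<bullet> p"
    proof -
      have "(P *\<^sub>v p) \<bullet> (A *\<^sub>v y) = (A *\<^sub>v y) \<bullet> (P *\<^sub>v p)"
        using A y pyc by (simp add: comm_scalar_prod[of _ n])
      also have "\<dots> = z \<bullet> p" using transp_form[OF P _ pc, of "A *\<^sub>v y"] A y by (simp add: z_def)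
      finally show ?thesis .
    qed
    have "(C *\<^sub>v y) \<bullet> (A *\<^sub>v (C *\<^sub>v y)) =
        y \<bullet> (A *\<^sub>v y) - y \<bullet> (A *\<^sub>v (P *\<^sub>v p)) - ((P *\<^sub>v p) \<bullet> (A *\<^sub>v y) - (P *\<^sub>v p) \<bullet> (A *\<^sub>v (P *\<^sub>v p)))"
      unfolding Cy' using A y pyc
      by (simp add: mult_minus_distrib_mat_vec[of _ n n] scalar_prod_minus_distrib[of _ n]
        minus_scalar_prod_distrib[of _ n])
    also have "y \<bullet> (A *\<^sub>v (P *\<^sub>v p)) = (P *\<^sub>v p) \<bullet> (A *\<^sub>v y)" using sym_form[OF A y pyc] .
    finally have "(C *\<^sub>v y) \<bullet> (A *\<^sub>v (C *\<^sub>v y)) = y \<bullet> (A *\<^sub>v y) - 2 * (z \<bullet> p) + (P *\<^sub>v p) \<bullet> (A *\<^sub>v (P *\<^sub>v p))"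
      using zp by simp
    then have "(C *\<^sub>v y) \<bullet> (A *\<^sub>v (C *\<^sub>v y)) \<le> y \<bullet> (A *\<^sub>v (C *\<^sub>v y)) \<and> y \<bullet> (A *\<^sub>v (C *\<^sub>v y)) \<le> y \<bullet> (A *\<^sub>v y)"
      using k1 b1 b2 pp by simp
  }
  then show ?thesis using s Cc by (simp add: tinv_def C_def)
qed



lemma self_sp_zero:
  fixes v :: "real vec"
  assumes v: "v \<in> carrier_vec n" and z: "v \<bullet> v = 0"
  shows "v = 0\<^sub>v n"
proof -
  have "(\<Sum>i\<in>{0..<n}. v $ i * v $ i) = 0" using z v by (simp add: scalar_prod_def)
  then have "\<forall>i\<in>{0..<n}. v $ i * v $ i = 0"
    by (subst sum_nonneg_eq_0_iff[symmetric]) auto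
  then show ?thesis using v by (intro eq_vecI) auto
qed

lemma one_minus_app:
  fixes M :: "real mat"
  assumes M: "M \<in> carrier_mat n n" and y: "y \<in> carrier_vec n"
  shows "(1\<^sub>m n - M) *\<^sub>v y = y - M *\<^sub>v y"
  using minus_mult_distrib_mat_vec[OF one_carrier_mat M y] y by simp

lemma xform:
  fixes A X :: "real mat"
  assumes A: "A \<in> carrier_mat n n" "transpose_mat A = A" and X: "X \<in> carrier_mat n n"
    and x: "x \<in> carrier_vec n" and y: "y \<in> carrier_vec n"
  shows "(A *\<^sub>v x) \<bullet> (X *\<^sub>v (A *\<^sub>v y)) = x \<bullet> (A *\<^sub>v y) - x \<bullet> (A *\<^sub>v ((1\<^sub>m n - X * A) *\<^sub>v y))"
proof -
  have "(1\<^sub>m n - X * A) *\<^sub>v y = y - X *\<^sub>v (A *\<^sub>v y)"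
    using one_minus_app[of "X * A" n y] A X y by simp
  then have "x \<bullet> (A *\<^sub>v ((1\<^sub>m n - X * A) *\<^sub>v y)) = x \<bullet> (A *\<^sub>v y) - x \<bullet> (A *\<^sub>v (X *\<^sub>v (A *\<^sub>v y)))"
    using A X x y by (simp add: mult_minus_distrib_mat_vec[of _ n n] scalar_prod_minus_distrib[of _ n])
  moreover have "x \<bullet> (A *\<^sub>v (X *\<^sub>v (A *\<^sub>v y))) = (A *\<^sub>v x) \<bullet> (X *\<^sub>v (A *\<^sub>v y))"
    using transp_form[OF A(1) x, of "X *\<^sub>v (A *\<^sub>v y)"] A X y by simp
  ultimately show ?thesis by simp
qed

lemma tinv_binv:
  fixes A B :: "real mat"
  assumes A: "spd A n" and B: "B \<in> carrier_mat n n" and T: "tinv A (1\<^sub>m n - B * A) n"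
  shows "binv A B n"
proof -
  have Ac: "A \<in> carrier_mat n n" and At: "transpose_mat A = A" using A by (auto simp: spd_def)
  obtain Ai where Ai: "Ai \<in> carrier_mat n n" "A * Ai = 1\<^sub>m n" using spd_inverse[OF A] by blast
  have sur: "\<And>z. z \<in> carrier_vec n \<Longrightarrow> A *\<^sub>v (Ai *\<^sub>v z) = z"
    using Ai Ac by (metis assoc_mult_mat_vec one_mult_mat_vec)
  let ?T = "1\<^sub>m n - B * A"
  have Tc: "?T \<in> carrier_mat n n" by (rule minus_carrier_mat) (use B Ac in simp)
  {
    fix u v :: "real vec" assume u: "u \<in> carrier_vec n" and v: "v \<in> carrier_vec n"
    define x where "x = Ai *\<^sub>v u"
    define y where "y = Ai *\<^sub>v v"
    have xc: "x \<in> carrier_vec n" and yc: "y \<in> carrier_vec n" using Ai u v by (auto simp: x_def y_def)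
    have "u \<bullet> (B *\<^sub>v v) = (A *\<^sub>v x) \<bullet> (B *\<^sub>v (A *\<^sub>v y))" using sur u v by (simp add: x_def y_def)
    also have "\<dots> = x \<bullet> (A *\<^sub>v y) - x \<bullet> (A *\<^sub>v (?T *\<^sub>v y))" by (rule xform[OF Ac At B xc yc])
    also have "\<dots> = y \<bullet> (A *\<^sub>v x) - y \<bullet> (A *\<^sub>v (?T *\<^sub>v x))"
      using sym_form[OF Ac At xc yc] T xc yc by (simp add: tinv_def)
    also have "\<dots> = (A *\<^sub>v y) \<bullet> (B *\<^sub>v (A *\<^sub>v x))" by (rule xform[OF Ac At B yc xc, symmetric])
    also have "\<dots> = v \<bullet> (B *\<^sub>v u)" using sur u v by (simp add: x_def y_def)
    finally have "u \<bullet> (B *\<^sub>v v) = v \<bullet> (B *\<^sub>v u)" .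
  } note s = this
  {
    fix z :: "real vec" assume z: "z \<in> carrier_vec n"
    define y where "y = Ai *\<^sub>v z"
    have yc: "y \<in> carrier_vec n" using Ai z by (simp add: y_def)
    have zy: "z = A *\<^sub>v y" using sur z by (simp add: y_def)
    have q: "z \<bullet> (B *\<^sub>v z) = y \<bullet> (A *\<^sub>v y) - y \<bullet> (A *\<^sub>v (?T *\<^sub>v y))"
      unfolding zy by (rule xform[OF Ac At B yc yc])
    have Ty: "?T *\<^sub>v y = y - B *\<^sub>v z" using one_minus_app[of "B * A" n y] Ac B yc zy by simp
    have Bz: "B *\<^sub>v z = y - ?T *\<^sub>v y" using Ty B z yc by auto
    have Tyc: "?T *\<^sub>v y \<in> carrier_vec n" using Tc yc by simp
    have t1: "(?T *\<^sub>v y) \<bullet> (A *\<^sub>v (?T *\<^sub>v y)) \<le> y \<bullet> (A *\<^sub>v (?T *\<^sub>v y))"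
      and t2: "y \<bullet> (A *\<^sub>v (?T *\<^sub>v y)) \<le> y \<bullet> (A *\<^sub>v y)" using T yc by (auto simp: tinv_def)
    have "(B *\<^sub>v z) \<bullet> (A *\<^sub>v (B *\<^sub>v z)) = y \<bullet> (A *\<^sub>v y) - y \<bullet> (A *\<^sub>v (?T *\<^sub>v y)) -
        ((?T *\<^sub>v y) \<bullet> (A *\<^sub>v y) - (?T *\<^sub>v y) \<bullet> (A *\<^sub>v (?T *\<^sub>v y)))"
      unfolding Bz using Ac yc Tyc
      by (simp add: mult_minus_distrib_mat_vec[of _ n n] scalar_prod_minus_distrib[of _ n]
        minus_scalar_prod_distrib[of _ n])
    also have "(?T *\<^sub>v y) \<bullet> (A *\<^sub>v y) = y \<bullet> (A *\<^sub>v (?T *\<^sub>v y))" using sym_form[OF Ac At Tyc yc] .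
    finally have "0 \<le> z \<bullet> (B *\<^sub>v z) \<and> (B *\<^sub>v z) \<bullet> (A *\<^sub>v (B *\<^sub>v z)) \<le> z \<bullet> (B *\<^sub>v z)"
      using q t1 t2 by simp
  }
  then show ?thesis using s B by (simp add: binv_def)
qed

lemma galerkin_spd:
  fixes A P :: "real mat"
  assumes A: "spd A m" and P: "P \<in> carrier_mat m k" and R: "full_col_rank P"
  shows "spd (transpose_mat P * A * P) k"
proof -
  have Ac: "A \<in> carrier_mat m m" and At: "transpose_mat A = A" using A by (auto simp: spd_def)
  have Pt: "transpose_mat P \<in> carrier_mat k m" using P by simp
  have PtA: "transpose_mat P * A \<in> carrier_mat k m" using Pt Ac by simp
  have c: "transpose_mat P * A * P \<in> carrier_mat k k" using PtA P by simp
  have "transpose_mat (transpose_mat P * A * P) = transpose_mat P * transpose_mat (transpose_mat P * A)"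
    using transpose_mult[OF PtA P] .
  also have "transpose_mat (transpose_mat P * A) = transpose_mat A * P"
    using transpose_mult[OF Pt Ac] by simp
  finally have t: "transpose_mat (transpose_mat P * A * P) = transpose_mat P * A * P"
    using At Pt Ac P by simp
  {
    fix v :: "real vec" assume v: "v \<in> carrier_vec k" and nz: "v \<noteq> 0\<^sub>v k"
    have Pv: "P *\<^sub>v v \<in> carrier_vec m" using P v by simp
    have Pnz: "P *\<^sub>v v \<noteq> 0\<^sub>v m" using R nz v P by (auto simp: full_col_rank_def)
    have "(transpose_mat P * A * P) *\<^sub>v v = transpose_mat P *\<^sub>v (A *\<^sub>v (P *\<^sub>v v))"
      using assoc_mult_mat_vec[OF PtA P v] assoc_mult_mat_vec[OF Pt Ac Pv] by simp
    then have "v \<bullet> ((transpose_mat P * A * P) *\<^sub>v v) = (P *\<^sub>v v) \<bullet> (A *\<^sub>v (P *\<^sub>v v))"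
    proof -
      have APv: "A *\<^sub>v (P *\<^sub>v v) \<in> carrier_vec m" using Ac Pv by simp
      have "v \<bullet> (transpose_mat P *\<^sub>v (A *\<^sub>v (P *\<^sub>v v))) = (transpose_mat P *\<^sub>v (A *\<^sub>v (P *\<^sub>v v))) \<bullet> v"
        by (rule comm_scalar_prod[of _ k], insert v Pt APv, auto)
      also have "\<dots> = (A *\<^sub>v (P *\<^sub>v v)) \<bullet> (P *\<^sub>v v)"
        using transp_form[OF P APv v] by simp
      also have "\<dots> = (P *\<^sub>v v) \<bullet> (A *\<^sub>v (P *\<^sub>v v))"
        by (rule comm_scalar_prod[of _ m], insert APv Pv, auto)
      finally show ?thesis using \<open>(transpose_mat P * A * P) *\<^sub>v v = _\<close> by simp
    qed
    also have "\<dots> > 0" using A Pv Pnz by (simp add: spd_def)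
    finally have "v \<bullet> ((transpose_mat P * A * P) *\<^sub>v v) > 0" .
  }
  then show ?thesis using c t by (simp add: spd_def)
qed



lemma mat_zero_vec[simp]:
  fixes M :: "real mat"
  assumes "M \<in> carrier_mat n m"
  shows "M *\<^sub>v 0\<^sub>v m = 0\<^sub>v n"
  by (rule eq_vecI, insert assms, auto)

lemma adj_gs:
  fixes A S :: "real mat"
  assumes A: "A \<in> carrier_mat n n" "transpose_mat A = A" and S: "S \<in> carrier_mat n n"
    and u: "u \<in> carrier_vec n" and v: "v \<in> carrier_vec n"
  shows "u \<bullet> (A *\<^sub>v ((1\<^sub>m n - transpose_mat S * A) *\<^sub>v v)) = ((1\<^sub>m n - S * A) *\<^sub>v u) \<bullet> (A *\<^sub>v v)"
proof -
  have St: "transpose_mat S \<in> carrier_mat n n" using S by simp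
  have e1: "(1\<^sub>m n - transpose_mat S * A) *\<^sub>v v = v - transpose_mat S *\<^sub>v (A *\<^sub>v v)"
    using one_minus_app[of "transpose_mat S * A" n v] St A v by simp
  have e2: "(1\<^sub>m n - S * A) *\<^sub>v u = u - S *\<^sub>v (A *\<^sub>v u)"
    using one_minus_app[of "S * A" n u] S A u by simp
  have Av: "A *\<^sub>v v \<in> carrier_vec n" and Au: "A *\<^sub>v u \<in> carrier_vec n" using A u v by auto
  have "u \<bullet> (A *\<^sub>v (transpose_mat S *\<^sub>v (A *\<^sub>v v))) = (A *\<^sub>v u) \<bullet> (transpose_mat S *\<^sub>v (A *\<^sub>v v))"
    using transp_form[OF A(1) u, of "transpose_mat S *\<^sub>v (A *\<^sub>v v)"] A St Av by simp
  also have "\<dots> = (S *\<^sub>v (A *\<^sub>v u)) \<bullet> (A *\<^sub>v v)"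
    using transp_form[OF St Au Av] by simp
  finally have k: "u \<bullet> (A *\<^sub>v (transpose_mat S *\<^sub>v (A *\<^sub>v v))) = (S *\<^sub>v (A *\<^sub>v u)) \<bullet> (A *\<^sub>v v)" .
  show ?thesis unfolding e1 e2 using k A u v St S Av Au
    by (simp add: mult_minus_distrib_mat_vec[of _ n n] scalar_prod_minus_distrib[of _ n]
        minus_scalar_prod_distrib[of _ n])
qed

lemma tinv_zero:
  fixes A T :: "real mat"
  assumes A: "spd A n" and T: "T \<in> carrier_mat n n" and Z: "\<And>y. y \<in> carrier_vec n \<Longrightarrow> T *\<^sub>v y = 0\<^sub>v n"
  shows "tinv A T n"
proof -
  have Ac: "A \<in> carrier_mat n n" using A by (simp add: spd_def)
  have "\<And>y. y \<in> carrier_vec n \<Longrightarrow> 0 \<le> y \<bullet> (A *\<^sub>v y)"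
  proof -
    fix y :: "real vec" assume y: "y \<in> carrier_vec n"
    show "0 \<le> y \<bullet> (A *\<^sub>v y)"
    proof (cases "y = 0\<^sub>v n")
      case True then show ?thesis using Ac by simp
    next
      case False then show ?thesis using A y by (auto simp: spd_def less_imp_le)
    qed
  qed
  then show ?thesis using T Z Ac by (simp add: tinv_def)
qed

lemma ic_pd:
  fixes B L :: "real mat"
  assumes B: "B \<in> carrier_mat n n" and L: "L \<in> carrier_mat n n" and BM: "B * (L * transpose_mat L) = 1\<^sub>m n"
  shows "\<And>u v. u \<in> carrier_vec n \<Longrightarrow> v \<in> carrier_vec n \<Longrightarrow> u \<bullet> (B *\<^sub>v v) = v \<bullet> (B *\<^sub>v u)"
    and "\<And>x. x \<in> carrier_vec n \<Longrightarrow> x \<noteq> 0\<^sub>v n \<Longrightarrow> x \<bullet> (B *\<^sub>v x) > 0"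
proof -
  define M where "M = L * transpose_mat L"
  have Mc: "M \<in> carrier_mat n n" using L by (simp add: M_def)
  have Lt: "transpose_mat L \<in> carrier_mat n n" using L by simp
  have MB: "M * B = 1\<^sub>m n" using mat_mult_left_right_inverse[OF B Mc] BM by (simp add: M_def)
  have Mt: "transpose_mat M = M" using transpose_mult[OF L Lt] by (simp add: M_def)
  have MBx: "\<And>x. x \<in> carrier_vec n \<Longrightarrow> M *\<^sub>v (B *\<^sub>v x) = x"
    using MB Mc B by (metis assoc_mult_mat_vec one_mult_mat_vec)
  have Mq: "\<And>y. y \<in> carrier_vec n \<Longrightarrow> y \<bullet> (M *\<^sub>v y) = (transpose_mat L *\<^sub>v y) \<bullet> (transpose_mat L *\<^sub>v y)"
    using transp_form[OF L] L Lt by (simp add: M_def)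
  have Mc2: "\<And>y. y \<in> carrier_vec n \<Longrightarrow> M *\<^sub>v y = L *\<^sub>v (transpose_mat L *\<^sub>v y)"
    using L Lt by (simp add: M_def)
  {
    fix u v :: "real vec" assume u: "u \<in> carrier_vec n" and v: "v \<in> carrier_vec n"
    have Bu: "B *\<^sub>v u \<in> carrier_vec n" and Bv: "B *\<^sub>v v \<in> carrier_vec n" using B u v by auto
    have "u \<bullet> (B *\<^sub>v v) = (M *\<^sub>v (B *\<^sub>v u)) \<bullet> (B *\<^sub>v v)" using MBx u by simp
    also have "\<dots> = (B *\<^sub>v v) \<bullet> (M *\<^sub>v (B *\<^sub>v u))"
      by (rule comm_scalar_prod[of _ n], insert Mc Bu Bv, auto)
    also have "\<dots> = (B *\<^sub>v u) \<bullet> (M *\<^sub>v (B *\<^sub>v v))" using sym_form[OF Mc Mt Bv Bu] .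
    also have "\<dots> = (B *\<^sub>v u) \<bullet> v" using MBx v by simp
    also have "\<dots> = v \<bullet> (B *\<^sub>v u)" by (rule comm_scalar_prod[of _ n], insert Bu v, auto)
    finally show "u \<bullet> (B *\<^sub>v v) = v \<bullet> (B *\<^sub>v u)" .
  }
  fix x :: "real vec" assume x: "x \<in> carrier_vec n" and nz: "x \<noteq> 0\<^sub>v n"
  define y where "y = B *\<^sub>v x"
  have yc: "y \<in> carrier_vec n" using B x by (simp add: y_def)
  have "x \<bullet> (B *\<^sub>v x) = (M *\<^sub>v y) \<bullet> y" using MBx x by (simp add: y_def)
  also have "\<dots> = y \<bullet> (M *\<^sub>v y)" by (rule comm_scalar_prod[of _ n], insert Mc yc, auto)
  also have "\<dots> = (transpose_mat L *\<^sub>v y) \<bullet> (transpose_mat L *\<^sub>v y)" using Mq[OF yc] .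
  finally have q: "x \<bullet> (B *\<^sub>v x) = (transpose_mat L *\<^sub>v y) \<bullet> (transpose_mat L *\<^sub>v y)" .
  have Lyc: "transpose_mat L *\<^sub>v y \<in> carrier_vec n" using Lt yc by simp
  have ge: "(transpose_mat L *\<^sub>v y) \<bullet> (transpose_mat L *\<^sub>v y) \<ge> 0"
    unfolding scalar_prod_def by (auto intro!: sum_nonneg)
  have "(transpose_mat L *\<^sub>v y) \<bullet> (transpose_mat L *\<^sub>v y) \<noteq> 0"
  proof
    assume "(transpose_mat L *\<^sub>v y) \<bullet> (transpose_mat L *\<^sub>v y) = 0"
    then have "transpose_mat L *\<^sub>v y = 0\<^sub>v n" using self_sp_zero[OF Lyc] by simp
    then have "M *\<^sub>v y = 0\<^sub>v n" using Mc2[OF yc] L by simp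
    then show False using MBx[OF x] nz by (simp add: y_def)
  qed
  then show "x \<bullet> (B *\<^sub>v x) > 0" using q ge by simp
qed



lemma final_spd:
  fixes A T B Bco :: "real mat"
  assumes A: "spd A n" and T: "tinv A T n" and B: "B \<in> carrier_mat n n"
    and Bs: "\<And>u v. u \<in> carrier_vec n \<Longrightarrow> v \<in> carrier_vec n \<Longrightarrow> u \<bullet> (B *\<^sub>v v) = v \<bullet> (B *\<^sub>v u)"
    and Bpd: "\<And>x. x \<in> carrier_vec n \<Longrightarrow> x \<noteq> 0\<^sub>v n \<Longrightarrow> x \<bullet> (B *\<^sub>v x) > 0"
    and Bco: "Bco \<in> carrier_mat n n"
    and eq: "1\<^sub>m n - Bco * A = T * (1\<^sub>m n - B * A) * T"
  shows "spd Bco n"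
proof -
  have Ac: "A \<in> carrier_mat n n" and At: "transpose_mat A = A" using A by (auto simp: spd_def)
  have Tc: "T \<in> carrier_mat n n" using T by (simp add: tinv_def)
  obtain Ai where Ai: "Ai \<in> carrier_mat n n" "A * Ai = 1\<^sub>m n" using spd_inverse[OF A] by blast
  have sur: "\<And>z. z \<in> carrier_vec n \<Longrightarrow> A *\<^sub>v (Ai *\<^sub>v z) = z"
    using Ai Ac by (metis assoc_mult_mat_vec one_mult_mat_vec)
  define F where "F = 1\<^sub>m n - B * A"
  define Tco where "Tco = 1\<^sub>m n - Bco * A"
  have Fc: "F \<in> carrier_mat n n" unfolding F_def by (rule minus_carrier_mat) (use B Ac in simp)
  have app: "\<And>y. y \<in> carrier_vec n \<Longrightarrow> Tco *\<^sub>v y = T *\<^sub>v (F *\<^sub>v (T *\<^sub>v y))"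
  proof -
    fix y :: "real vec" assume y: "y \<in> carrier_vec n"
    have "Tco *\<^sub>v y = (T * F * T) *\<^sub>v y" using eq by (simp add: Tco_def F_def)
    also have "\<dots> = (T * F) *\<^sub>v (T *\<^sub>v y)"
      by (rule assoc_mult_mat_vec[of _ n n], insert Tc Fc y, auto)
    also have "\<dots> = T *\<^sub>v (F *\<^sub>v (T *\<^sub>v y))"
      by (rule assoc_mult_mat_vec[of _ n n], insert Tc Fc y, auto)
    finally show "Tco *\<^sub>v y = T *\<^sub>v (F *\<^sub>v (T *\<^sub>v y))" .
  qed
  have adjT: "\<And>u v. u \<in> carrier_vec n \<Longrightarrow> v \<in> carrier_vec n \<Longrightarrow> u \<bullet> (A *\<^sub>v (T *\<^sub>v v)) = (T *\<^sub>v u) \<bullet> (A *\<^sub>v v)"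
  proof -
    fix u v :: "real vec" assume u: "u \<in> carrier_vec n" and v: "v \<in> carrier_vec n"
    have Tu: "T *\<^sub>v u \<in> carrier_vec n" using Tc u by simp
    have "u \<bullet> (A *\<^sub>v (T *\<^sub>v v)) = v \<bullet> (A *\<^sub>v (T *\<^sub>v u))" using T u v by (simp add: tinv_def)
    also have "\<dots> = (T *\<^sub>v u) \<bullet> (A *\<^sub>v v)" using sym_form[OF Ac At v Tu] .
    finally show "u \<bullet> (A *\<^sub>v (T *\<^sub>v v)) = (T *\<^sub>v u) \<bullet> (A *\<^sub>v v)" .
  qed
  have Ff: "\<And>x w. x \<in> carrier_vec n \<Longrightarrow> w \<in> carrier_vec n \<Longrightarrow>
      x \<bullet> (A *\<^sub>v (F *\<^sub>v w)) = x \<bullet> (A *\<^sub>v w) - (A *\<^sub>v x) \<bullet> (B *\<^sub>v (A *\<^sub>v w))"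
    using xform[OF Ac At B] by (simp add: F_def)
  have Q: "\<And>u v. u \<in> carrier_vec n \<Longrightarrow> v \<in> carrier_vec n \<Longrightarrow>
     u \<bullet> (A *\<^sub>v (Tco *\<^sub>v v)) = (T *\<^sub>v u) \<bullet> (A *\<^sub>v (T *\<^sub>v v)) - (A *\<^sub>v (T *\<^sub>v u)) \<bullet> (B *\<^sub>v (A *\<^sub>v (T *\<^sub>v v)))"
  proof -
    fix u v :: "real vec" assume u: "u \<in> carrier_vec n" and v: "v \<in> carrier_vec n"
    have Tu: "T *\<^sub>v u \<in> carrier_vec n" and Tv: "T *\<^sub>v v \<in> carrier_vec n" using Tc u v by auto
    have "u \<bullet> (A *\<^sub>v (Tco *\<^sub>v v)) = (T *\<^sub>v u) \<bullet> (A *\<^sub>v (F *\<^sub>v (T *\<^sub>v v)))"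
      using app[OF v] adjT[OF u, of "F *\<^sub>v (T *\<^sub>v v)"] Fc Tv by simp
    then show "u \<bullet> (A *\<^sub>v (Tco *\<^sub>v v)) = (T *\<^sub>v u) \<bullet> (A *\<^sub>v (T *\<^sub>v v)) - (A *\<^sub>v (T *\<^sub>v u)) \<bullet> (B *\<^sub>v (A *\<^sub>v (T *\<^sub>v v)))"
      using Ff[OF Tu Tv] by simp
  qed
  have Qs: "\<And>u v. u \<in> carrier_vec n \<Longrightarrow> v \<in> carrier_vec n \<Longrightarrow>
     u \<bullet> (A *\<^sub>v (Tco *\<^sub>v v)) = v \<bullet> (A *\<^sub>v (Tco *\<^sub>v u))"
  proof -
    fix u v :: "real vec" assume u: "u \<in> carrier_vec n" and v: "v \<in> carrier_vec n"
    have Tu: "T *\<^sub>v u \<in> carrier_vec n" and Tv: "T *\<^sub>v v \<in> carrier_vec n" using Tc u v by auto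
    show "u \<bullet> (A *\<^sub>v (Tco *\<^sub>v v)) = v \<bullet> (A *\<^sub>v (Tco *\<^sub>v u))"
      unfolding Q[OF u v] Q[OF v u] using sym_form[OF Ac At Tu Tv] Bs[of "A *\<^sub>v (T *\<^sub>v u)" "A *\<^sub>v (T *\<^sub>v v)"] Ac Tu Tv
      by simp
  qed
  have X: "\<And>x y. x \<in> carrier_vec n \<Longrightarrow> y \<in> carrier_vec n \<Longrightarrow>
      (A *\<^sub>v x) \<bullet> (Bco *\<^sub>v (A *\<^sub>v y)) = x \<bullet> (A *\<^sub>v y) - x \<bullet> (A *\<^sub>v (Tco *\<^sub>v y))"
    using xform[OF Ac At Bco] by (simp add: Tco_def)
  have sym: "\<And>u v. u \<in> carrier_vec n \<Longrightarrow> v \<in> carrier_vec n \<Longrightarrow> u \<bullet> (Bco *\<^sub>v v) = v \<bullet> (Bco *\<^sub>v u)"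
  proof -
    fix u v :: "real vec" assume u: "u \<in> carrier_vec n" and v: "v \<in> carrier_vec n"
    define x where "x = Ai *\<^sub>v u"
    define y where "y = Ai *\<^sub>v v"
    have xc: "x \<in> carrier_vec n" and yc: "y \<in> carrier_vec n" using Ai u v by (auto simp: x_def y_def)
    have "u \<bullet> (Bco *\<^sub>v v) = (A *\<^sub>v x) \<bullet> (Bco *\<^sub>v (A *\<^sub>v y))" using sur u v by (simp add: x_def y_def)
    also have "\<dots> = (A *\<^sub>v y) \<bullet> (Bco *\<^sub>v (A *\<^sub>v x))"
      unfolding X[OF xc yc] X[OF yc xc] using sym_form[OF Ac At xc yc] Qs[OF xc yc] by simp
    also have "\<dots> = v \<bullet> (Bco *\<^sub>v u)" using sur u v by (simp add: x_def y_def)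
    finally show "u \<bullet> (Bco *\<^sub>v v) = v \<bullet> (Bco *\<^sub>v u)" .
  qed
  have pd: "\<And>z. z \<in> carrier_vec n \<Longrightarrow> z \<noteq> 0\<^sub>v n \<Longrightarrow> z \<bullet> (Bco *\<^sub>v z) > 0"
  proof -
    fix z :: "real vec" assume z: "z \<in> carrier_vec n" and nz: "z \<noteq> 0\<^sub>v n"
    define y where "y = Ai *\<^sub>v z"
    have yc: "y \<in> carrier_vec n" using Ai z by (simp add: y_def)
    have zy: "z = A *\<^sub>v y" using sur z by (simp add: y_def)
    have ynz: "y \<noteq> 0\<^sub>v n" using nz zy Ac by auto
    have ypos: "y \<bullet> (A *\<^sub>v y) > 0" using A yc ynz by (simp add: spd_def)
    define w where "w = T *\<^sub>v y"
    have wc: "w \<in> carrier_vec n" using Tc yc by (simp add: w_def)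
    have q1: "z \<bullet> (Bco *\<^sub>v z) = y \<bullet> (A *\<^sub>v y) - y \<bullet> (A *\<^sub>v (Tco *\<^sub>v y))"
      unfolding zy by (rule X[OF yc yc])
    have q2: "y \<bullet> (A *\<^sub>v (Tco *\<^sub>v y)) = w \<bullet> (A *\<^sub>v w) - (A *\<^sub>v w) \<bullet> (B *\<^sub>v (A *\<^sub>v w))"
      using Q[OF yc yc] by (simp add: w_def)
    have t: "w \<bullet> (A *\<^sub>v w) \<le> y \<bullet> (A *\<^sub>v y)" using T yc by (force simp: tinv_def w_def)
    show "z \<bullet> (Bco *\<^sub>v z) > 0"
    proof (cases "w = 0\<^sub>v n")
      case True
      then show ?thesis using q1 q2 ypos Ac B by simp
    next
      case False
      have Aw: "A *\<^sub>v w \<in> carrier_vec n" using Ac wc by simp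
      have "w \<bullet> (A *\<^sub>v w) > 0" using A wc False by (simp add: spd_def)
      then have "A *\<^sub>v w \<noteq> 0\<^sub>v n" using wc by auto
      then have "(A *\<^sub>v w) \<bullet> (B *\<^sub>v (A *\<^sub>v w)) > 0" using Bpd[OF Aw] by simp
      then show ?thesis using q1 q2 t by simp
    qed
  qed
  have "transpose_mat Bco = Bco" by (rule sym_from_bilinear[OF Bco sym])
  then show ?thesis using Bco pd by (simp add: spd_def)
qed



theorem corollary3p2:
  fixes A :: "real mat" and n :: nat and k :: nat
    and Lv :: nat and nl :: "nat \<Rightarrow> nat"
    and As Ps Ss Bs :: "nat \<Rightarrow> real mat"
    and B Bco :: "real mat"
  assumes A_spd: "spd A n"
    and top_dim: "nl Lv = n" and top_A: "As Lv = A"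
    and interp: "\<And>l. l < Lv \<Longrightarrow> Ps l \<in> carrier_mat (nl (Suc l)) (nl l) \<and> full_col_rank (Ps l)"
    and galerkin: "\<And>l. l < Lv \<Longrightarrow> As l = transpose_mat (Ps l) * As (Suc l) * Ps l"
    and smoother: "\<And>l. l \<le> Lv \<Longrightarrow> Ss l \<in> carrier_mat (nl l) (nl l) \<and>
                        Ss l * gs_part (As l) = 1\<^sub>m (nl l)"
    and coarsest: "Bs 0 \<in> carrier_mat (nl 0) (nl 0)" "Bs 0 * As 0 = 1\<^sub>m (nl 0)"
    and vcycle: "\<And>l. 1 \<le> l \<Longrightarrow> l \<le> Lv \<Longrightarrow> Bs l \<in> carrier_mat (nl l) (nl l) \<and>
        1\<^sub>m (nl l) - Bs l * As l =
          (1\<^sub>m (nl l) - transpose_mat (Ss l) * As l)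
        * (1\<^sub>m (nl l) - Ps (l - 1) * Bs (l - 1) * transpose_mat (Ps (l - 1)) * As l)
        * (1\<^sub>m (nl l) - Ss l * As l)"
    and ic_welldef: "\<And>j. j < n \<Longrightarrow> iluk_pivot k A j > 0"
    and ic_prec: "B \<in> carrier_mat n n"
      "B * (ick_factor k A * transpose_mat (ick_factor k A)) = 1\<^sub>m n"
    and Bco: "Bco \<in> carrier_mat n n"
      "1\<^sub>m n - Bco * A = (1\<^sub>m n - transpose_mat (Bs Lv) * A) * (1\<^sub>m n - B * A) * (1\<^sub>m n - Bs Lv * A)"
  shows "spd Bco n"
proof -
  have levspd: "\<And>l. l \<le> Lv \<Longrightarrow> spd (As l) (nl l)"
  proof -
    have "\<forall>d. d \<le> Lv \<longrightarrow> spd (As (Lv - d)) (nl (Lv - d))"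
    proof
      fix d show "d \<le> Lv \<longrightarrow> spd (As (Lv - d)) (nl (Lv - d))"
      proof (induction d)
        case 0 then show ?case using A_spd top_dim top_A by simp
      next
        case (Suc d)
        show ?case
        proof
          assume d: "Suc d \<le> Lv"
          define l where "l = Lv - Suc d"
          have l: "l < Lv" and sl: "Suc l = Lv - d" using d by (auto simp: l_def)
          have "spd (As (Suc l)) (nl (Suc l))" using Suc d sl by simp
          then have "spd (transpose_mat (Ps l) * As (Suc l) * Ps l) (nl l)"
            using galerkin_spd interp[OF l] by blast
          then show "spd (As (Lv - Suc d)) (nl (Lv - Suc d))" using galerkin[OF l] by (simp add: l_def)
        qed
      qed
    qed
    fix l assume "l \<le> Lv"
    then show "spd (As l) (nl l)" using \<open>\<forall>d. _\<close>[rule_format, of "Lv - l"] by simp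
  qed
  have lev: "\<And>l. l \<le> Lv \<Longrightarrow> Bs l \<in> carrier_mat (nl l) (nl l) \<and> tinv (As l) (1\<^sub>m (nl l) - Bs l * As l) (nl l)"
  proof -
    fix l show "l \<le> Lv \<Longrightarrow> Bs l \<in> carrier_mat (nl l) (nl l) \<and> tinv (As l) (1\<^sub>m (nl l) - Bs l * As l) (nl l)"
    proof (induction l)
      case 0
      have Tc: "1\<^sub>m (nl 0) - Bs 0 * As 0 \<in> carrier_mat (nl 0) (nl 0)"
        by (rule minus_carrier_mat) (use coarsest in simp)
      have "tinv (As 0) (1\<^sub>m (nl 0) - Bs 0 * As 0) (nl 0)"
      proof (rule tinv_zero[OF levspd Tc])
        fix y :: "real vec" assume y: "y \<in> carrier_vec (nl 0)"
        show "(1\<^sub>m (nl 0) - Bs 0 * As 0) *\<^sub>v y = 0\<^sub>v (nl 0)"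
          unfolding coarsest(2) using one_minus_app[of "1\<^sub>m (nl 0)" "nl 0" y] y by auto
      qed simp
      then show ?case using coarsest by simp
    next
      case (Suc l)
      then have l: "l < Lv" by simp
      have IH: "Bs l \<in> carrier_mat (nl l) (nl l)" "tinv (As l) (1\<^sub>m (nl l) - Bs l * As l) (nl l)"
        using Suc by auto
      have spdl: "spd (As l) (nl l)" using levspd l by simp
      have spds: "spd (As (Suc l)) (nl (Suc l))" using levspd Suc.prems by simp
      have Ac: "As (Suc l) \<in> carrier_mat (nl (Suc l)) (nl (Suc l))" "transpose_mat (As (Suc l)) = As (Suc l)"
        using spds by (auto simp: spd_def)
      have P: "Ps l \<in> carrier_mat (nl (Suc l)) (nl l)" using interp[OF l] by simp
      have bi: "binv (As l) (Bs l) (nl l)" by (rule tinv_binv[OF spdl IH])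
      then have bi': "binv (transpose_mat (Ps l) * As (Suc l) * Ps l) (Bs l) (nl l)"
        using galerkin[OF l] by simp
      have C: "tinv (As (Suc l)) (1\<^sub>m (nl (Suc l)) - Ps l * Bs l * transpose_mat (Ps l) * As (Suc l)) (nl (Suc l))"
        by (rule coarse_tinv[OF Ac P bi'])
      have S: "Ss (Suc l) \<in> carrier_mat (nl (Suc l)) (nl (Suc l))" "Ss (Suc l) * gs_part (As (Suc l)) = 1\<^sub>m (nl (Suc l))"
        using smoother[OF Suc.prems] by auto
      have T: "tinv (As (Suc l)) ((1\<^sub>m (nl (Suc l)) - transpose_mat (Ss (Suc l)) * As (Suc l))
          * (1\<^sub>m (nl (Suc l)) - Ps l * Bs l * transpose_mat (Ps l) * As (Suc l))
          * (1\<^sub>m (nl (Suc l)) - Ss (Suc l) * As (Suc l))) (nl (Suc l))"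
        by (rule compose_tinv[OF Ac C gs_nonexp(1)[OF spds S] gs_nonexp(2)[OF spds S] adj_gs[OF Ac S(1)]])
      have V: "Bs (Suc l) \<in> carrier_mat (nl (Suc l)) (nl (Suc l)) \<and>
        1\<^sub>m (nl (Suc l)) - Bs (Suc l) * As (Suc l) =
          (1\<^sub>m (nl (Suc l)) - transpose_mat (Ss (Suc l)) * As (Suc l))
        * (1\<^sub>m (nl (Suc l)) - Ps l * Bs l * transpose_mat (Ps l) * As (Suc l))
        * (1\<^sub>m (nl (Suc l)) - Ss (Suc l) * As (Suc l))"
        using vcycle[of "Suc l"] Suc.prems by simp
      then show ?case using T by simp
    qed
  qed
  have top: "Bs Lv \<in> carrier_mat n n" "tinv A (1\<^sub>m n - Bs Lv * A) n"
    using lev[of Lv] top_dim top_A by auto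
  have bt: "binv A (Bs Lv) n" by (rule tinv_binv[OF A_spd top])
  have "transpose_mat (Bs Lv) = Bs Lv"
    by (rule sym_from_bilinear[OF top(1)]) (use bt in \<open>auto simp: binv_def\<close>)
  then have eq: "1\<^sub>m n - Bco * A = (1\<^sub>m n - Bs Lv * A) * (1\<^sub>m n - B * A) * (1\<^sub>m n - Bs Lv * A)"
    using Bco(2) by simp
  have dA: "dim_row A = n" using A_spd by (auto simp: spd_def)
  have Lc: "ick_factor k A \<in> carrier_mat n n" using dA by (simp add: ick_factor_def)
  show ?thesis
    by (rule final_spd[OF A_spd top(2) ic_prec(1) ic_pd(1)[OF ic_prec(1) Lc ic_prec(2)] ic_pd(2)[OF ic_prec(1) Lc ic_prec(2)] Bco(1) eq])
qed

end
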